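(* Let $v$ be a scalar-valued function on an open set $\Omega\subseteq\mathbb{R}^n$ ($n>1$) and let $f$ be a differentiable $\mathbb{C}_n$-valued function on $\Omega$. Then the identity \[(-\Delta_n - v I)\phi = \left(\partial_{\underline{x}} + M^f\right)\left(\partial_{\underline{x}} - M^f\right)\phi\] holds for all (twice differentiable) scalar-valued functions $\phi$ on $\Omega$, where $I$ is the identity operator, if and only if \[\partial_{\underline{x}} f + f^2 = v .\]
   Context: $\mathbb{R}_{0,n}$ is the real Clifford algebra generated by an orthonormal basis $e_1,\dots,e_n$ of $\mathbb{R}^n$ with relations $e_je_k+e_ke_j=-2\delta_{jk}$; $\mathbb{C}_n=\mathbb{R}_{0,n}\otimes\mathbb{C}$. The Dirac operator is $\partial_{\underline{x}}=\sum_{j=1}^n e_j\partial_{x_j}$, acting from the left on Clifford-valued functions, so that $\Delta_n=-\partial_{\underline{x}}^2$ is the Laplacian. For a function $f$, $M^f$ denotes right multiplication by $f$: $M^f g = gf$. *)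

theory Defs
  imports "HOL-Analysis.Analysis"
begin

text \<open>Complex Clifford algebra C_n = R_{0,n} (x) C over the generators e_j, j :: 'n,
  where 'n is a finite linearly ordered index type with n = CARD('n).
  An element is the vector of its coefficients on the basis blades e_A,
  A a subset of the index type (e_A = e_{a1} ... e_{ak} with a1 < ... < ak).\<close>

type_synonym 'n clif = "(complex, 'n set) vec"

definition cl_scalar :: "complex \<Rightarrow> ('n::{finite,linorder}) clif" where
  "cl_scalar c = (\<chi> A. if A = {} then c else 0)"

definition cl_e :: "'n::{finite,linorder} \<Rightarrow> 'n clif" where
  "cl_e j = (\<chi> A. if A = {j} then 1 else 0)"

text \<open>Sign in e_A e_B = cl_sign A B e_{A symmetric-difference B}, using e_j e_k = - e_k e_j
  (j \<noteq> k) and e_j e_j = -1.\<close>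
definition cl_sign :: "'n::{finite,linorder} set \<Rightarrow> 'n set \<Rightarrow> complex" where
  "cl_sign A B = (-1) ^ (card {(a, b). a \<in> A \<and> b \<in> B \<and> b < a} + card (A \<inter> B))"

definition cl_mult :: "'n::{finite,linorder} clif \<Rightarrow> 'n clif \<Rightarrow> 'n clif" where
  "cl_mult x y = (\<chi> C. \<Sum>A\<in>UNIV. \<Sum>B\<in>UNIV.
      if (A - B) \<union> (B - A) = C then cl_sign A B * (x $ A) * (y $ B) else 0)"

definition pd :: "'n::finite \<Rightarrow> (real ^ 'n \<Rightarrow> 'b::real_normed_vector) \<Rightarrow> real ^ 'n \<Rightarrow> 'b" where
  "pd j g x = frechet_derivative g (at x) (axis j 1)"

definition dirac :: "((real, 'n::{finite,linorder}) vec \<Rightarrow> 'n clif) \<Rightarrow> (real, 'n) vec \<Rightarrow> 'n clif" where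
  "dirac g x = (\<Sum>j\<in>UNIV. cl_mult (cl_e j) (pd j g x))"

definition laplacian :: "(real ^ ('n::finite) \<Rightarrow> complex) \<Rightarrow> real ^ 'n \<Rightarrow> complex" where
  "laplacian \<phi> x = (\<Sum>j\<in>UNIV. pd j (\<lambda>y. pd j \<phi> y) x)"

definition twice_differentiable_on :: "(real ^ ('n::finite) \<Rightarrow> complex) \<Rightarrow> (real ^ 'n) set \<Rightarrow> bool" where
  "twice_differentiable_on \<phi> S \<longleftrightarrow>
     \<phi> differentiable_on S \<and> (\<forall>j. (\<lambda>y. pd j \<phi> y) differentiable_on S)"

end

theory Submission
  imports Defs
begin

lemma young_half:
  fixes \<phi> :: "real ^ 'n::finite \<Rightarrow> complex"
  assumes "open \<Omega>" "x \<in> \<Omega>" "\<phi> differentiable_on \<Omega>"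
    and L: "((\<lambda>y. frechet_derivative \<phi> (at y) b) has_derivative L) (at x)"
    and na: "norm a = 1" and nb: "norm b = 1" and e: "e > 0"
  shows "\<exists>d>0. \<forall>h. 0 < h \<and> h < d \<longrightarrow>
     norm (\<phi> (x + h *\<^sub>R a + h *\<^sub>R b) - \<phi> (x + h *\<^sub>R a) - \<phi> (x + h *\<^sub>R b) + \<phi> x - (h*h) *\<^sub>R L a) \<le> 3 * e * (h*h)"
proof -
  define \<psi> where "\<psi> y = frechet_derivative \<phi> (at y) b" for y
  obtain d0 where d0: "d0 > 0" "ball x d0 \<subseteq> \<Omega>" using assms(1,2) open_contains_ball by blast
  have bl: "bounded_linear L" using L has_derivative_bounded_linear by blast
  obtain d1 where d1: "d1 > 0" "\<And>y. norm (y - x) < d1 \<Longrightarrow> norm (\<psi> y - \<psi> x - L (y - x)) \<le> e * norm (y - x)"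
    using L e unfolding has_derivative_at_alt \<psi>_def by blast
  have dphi: "(\<phi> has_derivative frechet_derivative \<phi> (at p)) (at p)" if "p \<in> \<Omega>" for p
    using assms(1,3) that by (meson differentiable_on_eq_differentiable_at frechet_derivative_works)
  show ?thesis
  proof (intro exI[of _ "min d0 d1 / 2"] conjI allI impI)
    show "min d0 d1 / 2 > 0" using d0 d1 by simp
    fix h :: real assume h: "0 < h \<and> h < min d0 d1 / 2"
    define G where "G t = \<phi> (x + h *\<^sub>R a + t *\<^sub>R b) - \<phi> (x + t *\<^sub>R b) - t *\<^sub>R (h *\<^sub>R L a)" for t
    have nrm: "norm (s *\<^sub>R a + t *\<^sub>R b) \<le> 2*h" if "s \<in> {0..h}" "t \<in> {0..h}" for s t
    proof -
      have "norm (s *\<^sub>R a + t *\<^sub>R b) \<le> norm (s *\<^sub>R a) + norm (t *\<^sub>R b)" by (rule norm_triangle_ineq)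
      also have "\<dots> = s + t" using that na nb by simp
      finally show ?thesis using that by simp
    qed
    have inO: "x + (s *\<^sub>R a + t *\<^sub>R b) \<in> \<Omega>" if "s \<in> {0..h}" "t \<in> {0..h}" for s t
    proof -
      have "norm (s *\<^sub>R a + t *\<^sub>R b) < d0" using nrm[OF that] h by simp
      then have "x + (s *\<^sub>R a + t *\<^sub>R b) \<in> ball x d0" using norm_minus_commute[of x "x + (s *\<^sub>R a + t *\<^sub>R b)"] by (simp add: dist_norm)
      then show ?thesis using d0(2) by blast
    qed
    have derG: "(G has_derivative (\<lambda>s. s *\<^sub>R (\<psi> (x + h *\<^sub>R a + t *\<^sub>R b) - \<psi> (x + t *\<^sub>R b) - h *\<^sub>R L a))) (at t within {0..h})"
      if t: "t \<in> {0..h}" for t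
    proof -
      have p1: "x + h *\<^sub>R a + t *\<^sub>R b \<in> \<Omega>" using inO[of h t] t h by (simp add: add.assoc)
      have p2: "x + t *\<^sub>R b \<in> \<Omega>" using inO[of 0 t] t h by simp
      have l1: "linear (frechet_derivative \<phi> (at (x + h *\<^sub>R a + t *\<^sub>R b)))"
        using dphi[OF p1] has_derivative_linear by blast
      have l2: "linear (frechet_derivative \<phi> (at (x + t *\<^sub>R b)))"
        using dphi[OF p2] has_derivative_linear by blast
      have a1: "((\<lambda>t. x + h *\<^sub>R a + t *\<^sub>R b) has_derivative (\<lambda>s. s *\<^sub>R b)) (at t within {0..h})"
        by (auto intro!: derivative_eq_intros)
      have a2: "((\<lambda>t. x + t *\<^sub>R b) has_derivative (\<lambda>s. s *\<^sub>R b)) (at t within {0..h})"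
        by (auto intro!: derivative_eq_intros)
      have c1: "((\<lambda>t. \<phi> (x + h *\<^sub>R a + t *\<^sub>R b)) has_derivative (\<lambda>s. s *\<^sub>R \<psi> (x + h *\<^sub>R a + t *\<^sub>R b))) (at t within {0..h})"
        using has_derivative_in_compose[OF a1, of \<phi>, OF has_derivative_at_withinI[OF dphi[OF p1]]]
        by (simp add: o_def \<psi>_def linear_scale[OF l1])
      have c2: "((\<lambda>t. \<phi> (x + t *\<^sub>R b)) has_derivative (\<lambda>s. s *\<^sub>R \<psi> (x + t *\<^sub>R b))) (at t within {0..h})"
        using has_derivative_in_compose[OF a2, of \<phi>, OF has_derivative_at_withinI[OF dphi[OF p2]]]
        by (simp add: o_def \<psi>_def linear_scale[OF l2])
      have c3: "((\<lambda>t. t *\<^sub>R (h *\<^sub>R L a)) has_derivative (\<lambda>s. s *\<^sub>R (h *\<^sub>R L a))) (at t within {0..h})"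
        by (auto intro!: derivative_eq_intros)
      show ?thesis unfolding G_def
        using has_derivative_diff[OF has_derivative_diff[OF c1 c2] c3]
        by (simp add: algebra_simps)
    qed
    have bnd: "onorm (\<lambda>s. s *\<^sub>R (\<psi> (x + h *\<^sub>R a + t *\<^sub>R b) - \<psi> (x + t *\<^sub>R b) - h *\<^sub>R L a)) \<le> 3 * e * h"
      if t: "t \<in> {0..h}" for t
    proof (rule onorm_le)
      fix s :: real
      have A1: "norm (\<psi> (x + (h *\<^sub>R a + t *\<^sub>R b)) - \<psi> x - L (h *\<^sub>R a + t *\<^sub>R b)) \<le> e * (2*h)"
      proof -
        have "norm (h *\<^sub>R a + t *\<^sub>R b) < d1" using nrm[of h t] t h by simp
        then have "norm (\<psi> (x + (h *\<^sub>R a + t *\<^sub>R b)) - \<psi> x - L (h *\<^sub>R a + t *\<^sub>R b)) \<le> e * norm (h *\<^sub>R a + t *\<^sub>R b)"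
          using d1(2)[of "x + (h *\<^sub>R a + t *\<^sub>R b)"] by simp
        also have "\<dots> \<le> e * (2*h)" using nrm[of h t] t h e by (intro mult_left_mono) auto
        finally show ?thesis .
      qed
      have A2: "norm (\<psi> (x + t *\<^sub>R b) - \<psi> x - L (t *\<^sub>R b)) \<le> e * h"
      proof -
        have "norm (t *\<^sub>R b) < d1" using t h nb by simp
        then have "norm (\<psi> (x + t *\<^sub>R b) - \<psi> x - L (t *\<^sub>R b)) \<le> e * norm (t *\<^sub>R b)"
          using d1(2)[of "x + t *\<^sub>R b"] by simp
        also have "\<dots> \<le> e * h" using t nb e by (intro mult_left_mono) auto
        finally show ?thesis .
      qed
      have eq: "\<psi> (x + h *\<^sub>R a + t *\<^sub>R b) - \<psi> (x + t *\<^sub>R b) - h *\<^sub>R L a =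
          (\<psi> (x + (h *\<^sub>R a + t *\<^sub>R b)) - \<psi> x - L (h *\<^sub>R a + t *\<^sub>R b)) - (\<psi> (x + t *\<^sub>R b) - \<psi> x - L (t *\<^sub>R b))"
        using linear_add[OF bounded_linear.linear[OF bl]] linear_scale[OF bounded_linear.linear[OF bl]]
        by (simp add: algebra_simps)
      have "norm (\<psi> (x + h *\<^sub>R a + t *\<^sub>R b) - \<psi> (x + t *\<^sub>R b) - h *\<^sub>R L a) \<le> 3 * e * h"
        unfolding eq using order_trans[OF norm_triangle_ineq4 add_mono[OF A1 A2]] by (simp add: algebra_simps)
      then show "norm (s *\<^sub>R (\<psi> (x + h *\<^sub>R a + t *\<^sub>R b) - \<psi> (x + t *\<^sub>R b) - h *\<^sub>R L a)) \<le> 3 * e * h * norm s"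
      proof -
        assume H: "norm (\<psi> (x + h *\<^sub>R a + t *\<^sub>R b) - \<psi> (x + t *\<^sub>R b) - h *\<^sub>R L a) \<le> 3 * e * h"
        have "\<bar>s\<bar> * norm (\<psi> (x + h *\<^sub>R a + t *\<^sub>R b) - \<psi> (x + t *\<^sub>R b) - h *\<^sub>R L a) \<le> \<bar>s\<bar> * (3 * e * h)"
          using H by (rule mult_left_mono) simp
        then show ?thesis by (metis mult.commute norm_scaleR real_norm_def)
      qed
    qed
    have "norm (G h - G 0) \<le> 3 * e * h * norm (h - 0)"
      by (rule differentiable_bound[OF convex_real_interval(5) derG bnd]) (use h in auto)
    then show "norm (\<phi> (x + h *\<^sub>R a + h *\<^sub>R b) - \<phi> (x + h *\<^sub>R a) - \<phi> (x + h *\<^sub>R b) + \<phi> x - (h*h) *\<^sub>R L a) \<le> 3 * e * (h*h)"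
      using h by (simp add: G_def algebra_simps)
  qed
qed


definition cs :: "complex \<Rightarrow> ('n::{finite,linorder}) clif \<Rightarrow> 'n clif" where
  "cs c y = (\<chi> A. c * y $ A)"

lemma cl_mult_nth: "cl_mult x y $ C = (\<Sum>A\<in>UNIV. \<Sum>B\<in>UNIV.
      (if (A - B) \<union> (B - A) = C then cl_sign A B else 0) * (x $ A) * (y $ B))"
  unfolding cl_mult_def by (auto intro!: sum.cong)

lemma cl_mult_add_left: "cl_mult (x + y) z = cl_mult x z + cl_mult y z"
  by (simp add: vec_eq_iff cl_mult_nth algebra_simps sum.distrib)
lemma cl_mult_add_right: "cl_mult z (x + y) = cl_mult z x + cl_mult z y"
  by (simp add: vec_eq_iff cl_mult_nth algebra_simps sum.distrib)
lemma cl_mult_cs_left: "cl_mult (cs c x) y = cs c (cl_mult x y)"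
  by (simp add: vec_eq_iff cl_mult_nth cs_def sum_distrib_left algebra_simps)
lemma cl_mult_cs_right: "cl_mult x (cs c y) = cs c (cl_mult x y)"
  by (simp add: vec_eq_iff cl_mult_nth cs_def sum_distrib_left algebra_simps)
lemma cl_mult_zero_left: "cl_mult 0 y = 0"
  by (simp add: vec_eq_iff cl_mult_nth)
lemma cl_mult_zero_right: "cl_mult y 0 = 0"
  by (simp add: vec_eq_iff cl_mult_nth)
lemma cl_mult_minus_left: "cl_mult (- x) y = - cl_mult x y"
  by (simp add: vec_eq_iff cl_mult_nth sum_negf)
lemma cl_mult_minus_right: "cl_mult y (- x) = - cl_mult y x"
  by (simp add: vec_eq_iff cl_mult_nth sum_negf)
lemma cl_mult_diff_left: "cl_mult (x - y) z = cl_mult x z - cl_mult y z"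
  using cl_mult_add_left[of x "- y" z] by (simp add: cl_mult_minus_left)
lemma cl_mult_diff_right: "cl_mult z (x - y) = cl_mult z x - cl_mult z y"
  using cl_mult_add_right[of z x "- y"] by (simp add: cl_mult_minus_right)
lemma cl_mult_sum_right: "cl_mult z (\<Sum>i\<in>I. g i) = (\<Sum>i\<in>I. cl_mult z (g i))"
  by (induction I rule: infinite_finite_induct) (auto simp: cl_mult_zero_right cl_mult_add_right)
lemma cl_mult_sum_left: "cl_mult (\<Sum>i\<in>I. g i) z = (\<Sum>i\<in>I. cl_mult (g i) z)"
  by (induction I rule: infinite_finite_induct) (auto simp: cl_mult_zero_left cl_mult_add_left)

lemma cs_add_right: "cs c (x + y) = cs c x + cs c y"
  by (simp add: vec_eq_iff cs_def algebra_simps)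
lemma cs_add_left: "cs (c + d) x = cs c x + cs d x"
  by (simp add: vec_eq_iff cs_def algebra_simps)
lemma cs_diff_right: "cs c (x - y) = cs c x - cs c y"
  by (simp add: vec_eq_iff cs_def algebra_simps)
lemma cs_diff_left: "cs (c - d) x = cs c x - cs d x"
  by (simp add: vec_eq_iff cs_def algebra_simps)
lemma cs_one: "cs 1 x = x"
  by (simp add: vec_eq_iff cs_def)
lemma cs_cs: "cs c (cs d x) = cs (c * d) x"
  by (simp add: vec_eq_iff cs_def)
lemma cs_zero_right: "cs c 0 = 0"
  by (simp add: vec_eq_iff cs_def)
lemma cs_sum_right: "cs c (\<Sum>i\<in>I. g i) = (\<Sum>i\<in>I. cs c (g i))"
  by (induction I rule: infinite_finite_induct) (auto simp: cs_add_right cs_zero_right)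
lemma cs_sum_left: "cs (\<Sum>i\<in>I. g i) x = (\<Sum>i\<in>I. cs (g i) x)"
  by (induction I rule: infinite_finite_induct) (auto simp: cs_add_left, simp_all add: cs_def vec_eq_iff)

lemma bilinear_cs: "bilinear cs"
  unfolding bilinear_def
  by (auto intro!: linearI simp: vec_eq_iff cs_def algebra_simps vector_scaleR_component)

lemma bounded_bilinear_cs: "bounded_bilinear cs"
  using bilinear_cs bilinear_conv_bounded_bilinear by blast

lemma cl_scalar_cs: "cl_scalar c = cs c (cl_scalar 1)"
  by (simp add: vec_eq_iff cs_def cl_scalar_def)

lemma cl_sign_empty_left: "cl_sign {} B = 1"
  by (simp add: cl_sign_def)
lemma cl_sign_empty_right: "cl_sign A {} = 1"
  by (simp add: cl_sign_def)

lemma mult_if01: "(x::complex) * (if P then 1 else 0) = (if P then x else 0)" by simp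
lemma mult_if01L: "(if P then 1 else 0) * (x::complex) = (if P then x else 0)" by simp
lemma mult_if0L: "(if P then x else 0) * (y::complex) = (if P then x * y else 0)" by simp

lemma cl_mult_scalar_left: "cl_mult (cl_scalar c) y = cs c y"
proof -
  have "cl_mult (cl_scalar c) y $ C = c * y $ C" for C
  proof -
    have "cl_mult (cl_scalar c) y $ C = (\<Sum>A\<in>UNIV. if A = {} then (\<Sum>B\<in>UNIV.
      (if (A - B) \<union> (B - A) = C then cl_sign A B else 0) * c * (y $ B)) else 0)"
      unfolding cl_mult_nth by (intro sum.cong) (auto simp: cl_scalar_def)
    also have "\<dots> = (\<Sum>B\<in>UNIV. (if B = C then 1 else 0) * c * (y $ B))"
      by (simp add: cl_sign_empty_left cong: if_cong)
    also have "\<dots> = c * y $ C" by (simp only: mult_if01L mult_if0L, simp)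
    finally show ?thesis .
  qed
  then show ?thesis by (simp add: vec_eq_iff cs_def)
qed

lemma cl_mult_scalar_right: "cl_mult y (cl_scalar c) = cs c y"
proof -
  have "cl_mult y (cl_scalar c) $ C = c * y $ C" for C
  proof -
    have "cl_mult y (cl_scalar c) $ C = (\<Sum>A\<in>UNIV. (\<Sum>B\<in>UNIV. if B = {} then
      (if (A - B) \<union> (B - A) = C then cl_sign A B else 0) * (y $ A) * c else 0))"
      unfolding cl_mult_nth by (intro sum.cong) (auto simp: cl_scalar_def)
    also have "\<dots> = (\<Sum>A\<in>UNIV. (if A = C then 1 else 0) * (y $ A) * c)"
      by (simp add: cl_sign_empty_right cong: if_cong)
    also have "\<dots> = c * y $ C" by (simp only: mult_if01L mult_if0L, simp)
    finally show ?thesis .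
  qed
  then show ?thesis by (simp add: vec_eq_iff cs_def)
qed

lemma sum_delta2: "(\<Sum>A\<in>(UNIV::'a::finite set). \<Sum>B\<in>(UNIV::'b::finite set). (F A B::complex) * (if A = a then 1 else 0) * (if B = b then 1 else 0)) = F a b"
  by (simp only: mult_if01 mult_if0L, simp)

lemma cl_e_e: "cl_mult (cl_e j) (cl_e k) = (\<chi> C. if ({j} - {k}) \<union> ({k} - {j}) = C then cl_sign {j} {k} else 0)"
proof -
  have "cl_mult (cl_e j) (cl_e k) $ C = (if ({j} - {k}) \<union> ({k} - {j}) = C then cl_sign {j} {k} else 0)" for C
    unfolding cl_mult_nth cl_e_def using sum_delta2[of "\<lambda>A B. (if (A - B) \<union> (B - A) = C then cl_sign A B else 0)" "{j}" "{k}"]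
    by simp
  then show ?thesis by (simp add: vec_eq_iff)
qed

lemma cl_sign_jj: "cl_sign {j} {j} = -1"
proof -
  have "card {(a, b). a \<in> {j} \<and> b \<in> {j} \<and> b < a} = 0" by (auto simp: card_eq_0_iff)
  then show ?thesis unfolding cl_sign_def by (simp only: \<open>card _ = 0\<close>) simp
qed

lemma cl_sign_jk: "j \<noteq> k \<Longrightarrow> cl_sign {j} {k} = (if k < j then -1 else 1)"
proof -
  assume "j \<noteq> k"
  have "{(a, b). a \<in> {j} \<and> b \<in> {k} \<and> b < a} = (if k < j then {(j,k)} else {})" by auto
  then show ?thesis using \<open>j \<noteq> k\<close> by (simp add: cl_sign_def)
qed

lemma cl_e_sq: "cl_mult (cl_e j) (cl_e j) = cl_scalar (-1)"
  by (simp add: cl_e_e cl_sign_jj cl_scalar_def vec_eq_iff)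

lemma cl_e_anti: "j \<noteq> k \<Longrightarrow> cl_mult (cl_e j) (cl_e k) + cl_mult (cl_e k) (cl_e j) = 0"
  by (auto simp: cl_e_e cl_sign_jk vec_eq_iff insert_commute)

lemma cl_e_sym: "cl_mult (cl_e j) (cl_e k) + cl_mult (cl_e k) (cl_e j) = (if j = k then cl_scalar (-2) else 0)"
proof (cases "j = k")
  case True
  then show ?thesis using cl_e_sq[of j] by (simp add: vec_eq_iff cl_scalar_def)
next
  case False
  then show ?thesis using cl_e_anti[of j k] by simp
qed


lemma pd_eq: "(g has_derivative D) (at x) \<Longrightarrow> pd j g x = D (axis j 1)"
  unfolding pd_def using frechet_derivative_at by metis

lemma pd_local:
  assumes "open \<Omega>" "x \<in> \<Omega>" "\<And>y. y \<in> \<Omega> \<Longrightarrow> g y = g' y"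
  shows "pd j g x = pd j g' x"
proof -
  have "(\<lambda>D. (g has_derivative D) (at x)) = (\<lambda>D. (g' has_derivative D) (at x))"
  proof (rule ext, rule iffI)
    fix D assume "(g has_derivative D) (at x)"
    then show "(g' has_derivative D) (at x)"
      by (rule has_derivative_transform_within_open[OF _ assms(1,2)]) (use assms(3) in auto)
  next
    fix D assume "(g' has_derivative D) (at x)"
    then show "(g has_derivative D) (at x)"
      by (rule has_derivative_transform_within_open[OF _ assms(1,2)]) (use assms(3) in auto)
  qed
  then show ?thesis unfolding pd_def frechet_derivative_def by simp
qed

lemma young:
  fixes \<phi> :: "real ^ 'n::finite \<Rightarrow> complex"
  assumes "open \<Omega>" "x \<in> \<Omega>" "\<phi> differentiable_on \<Omega>"
    and dj: "pd j \<phi> differentiable (at x)" and dk: "pd k \<phi> differentiable (at x)"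
  shows "pd j (pd k \<phi>) x = pd k (pd j \<phi>) x"
proof -
  define Lk where "Lk = frechet_derivative (pd k \<phi>) (at x)"
  define Lj where "Lj = frechet_derivative (pd j \<phi>) (at x)"
  have Lk: "((\<lambda>y. frechet_derivative \<phi> (at y) (axis k 1)) has_derivative Lk) (at x)"
    using dk unfolding Lk_def frechet_derivative_works pd_def[abs_def] by simp
  have Lj: "((\<lambda>y. frechet_derivative \<phi> (at y) (axis j 1)) has_derivative Lj) (at x)"
    using dj unfolding Lj_def frechet_derivative_works pd_def[abs_def] by simp
  have e1: "pd j (pd k \<phi>) x = Lk (axis j 1)"
    using dk unfolding Lk_def frechet_derivative_works by (rule pd_eq)
  have e2: "pd k (pd j \<phi>) x = Lj (axis k 1)"
    using dj unfolding Lj_def frechet_derivative_works by (rule pd_eq)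
  have bound: "norm (Lk (axis j 1) - Lj (axis k 1)) \<le> 6 * e" if e: "e > 0" for e
  proof -
    obtain d1 where d1: "d1 > 0" "\<And>h. 0 < h \<and> h < d1 \<Longrightarrow>
     norm (\<phi> (x + h *\<^sub>R axis j 1 + h *\<^sub>R axis k 1) - \<phi> (x + h *\<^sub>R axis j 1) - \<phi> (x + h *\<^sub>R axis k 1) + \<phi> x - (h*h) *\<^sub>R Lk (axis j 1)) \<le> 3 * e * (h*h)"
      using young_half[OF assms(1,2,3) Lk _ _ e, of "axis j 1"] by auto
    obtain d2 where d2: "d2 > 0" "\<And>h. 0 < h \<and> h < d2 \<Longrightarrow>
     norm (\<phi> (x + h *\<^sub>R axis k 1 + h *\<^sub>R axis j 1) - \<phi> (x + h *\<^sub>R axis k 1) - \<phi> (x + h *\<^sub>R axis j 1) + \<phi> x - (h*h) *\<^sub>R Lj (axis k 1)) \<le> 3 * e * (h*h)"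
      using young_half[OF assms(1,2,3) Lj _ _ e, of "axis k 1"] by auto
    define h where "h = min d1 d2 / 2"
    have h: "0 < h" "h < d1" "h < d2" using d1 d2 by (auto simp: h_def)
    define \<Delta> where "\<Delta> = \<phi> (x + h *\<^sub>R axis j 1 + h *\<^sub>R axis k 1) - \<phi> (x + h *\<^sub>R axis j 1) - \<phi> (x + h *\<^sub>R axis k 1) + \<phi> x"
    have b1: "norm (\<Delta> - (h*h) *\<^sub>R Lk (axis j 1)) \<le> 3 * e * (h*h)"
      using d1(2)[of h] h unfolding \<Delta>_def by simp
    have b2: "norm (\<Delta> - (h*h) *\<^sub>R Lj (axis k 1)) \<le> 3 * e * (h*h)"
      using d2(2)[of h] h unfolding \<Delta>_def by (simp add: algebra_simps)
    have "norm ((h*h) *\<^sub>R (Lk (axis j 1) - Lj (axis k 1))) = norm ((\<Delta> - (h*h) *\<^sub>R Lj (axis k 1)) - (\<Delta> - (h*h) *\<^sub>R Lk (axis j 1)))"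
      by (simp add: algebra_simps)
    also have "\<dots> \<le> 3 * e * (h*h) + 3 * e * (h*h)"
      using order_trans[OF norm_triangle_ineq4 add_mono[OF b2 b1]] .
    finally have X: "norm ((h*h) *\<^sub>R (Lk (axis j 1) - Lj (axis k 1))) \<le> 3 * e * (h*h) + 3 * e * (h*h)" .
    have hh: "\<bar>h*h\<bar> = h*h" by simp
    from X have "(h*h) * norm (Lk (axis j 1) - Lj (axis k 1)) \<le> (h*h) * (6 * e)"
      by (simp only: norm_scaleR hh) (simp add: algebra_simps)
    then show ?thesis using h(1) by (simp add: mult_le_cancel_left_pos)
  qed
  have "norm (Lk (axis j 1) - Lj (axis k 1)) = 0"
  proof (rule ccontr)
    assume "norm (Lk (axis j 1) - Lj (axis k 1)) \<noteq> 0"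
    then have p: "norm (Lk (axis j 1) - Lj (axis k 1)) > 0" by simp
    have "norm (Lk (axis j 1) - Lj (axis k 1)) \<le> 6 * (norm (Lk (axis j 1) - Lj (axis k 1)) / 12)"
      using bound[of "norm (Lk (axis j 1) - Lj (axis k 1)) / 12"] p by simp
    then show False using p by simp
  qed
  then show ?thesis using e1 e2 by simp
qed

lemma sym_sum:
  assumes "\<And>j k. s j k = s k j"
  shows "(\<Sum>j\<in>UNIV. \<Sum>k\<in>UNIV. cs (s j k) (cl_mult (cl_e j) (cl_e (k::'n::{finite,linorder})))) = cl_scalar (- (\<Sum>j\<in>UNIV. s j j))"
proof -
  define S where "S = (\<Sum>j\<in>UNIV. \<Sum>k\<in>UNIV. cs (s j k) (cl_mult (cl_e j) (cl_e (k::'n))))"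
  have S2: "S = (\<Sum>j\<in>UNIV. \<Sum>k\<in>UNIV. cs (s j k) (cl_mult (cl_e k) (cl_e j)))"
    unfolding S_def by (subst sum.swap) (simp add: assms)
  have "S + S = (\<Sum>j\<in>UNIV. \<Sum>k\<in>UNIV. cs (s j k) (cl_mult (cl_e j) (cl_e k) + cl_mult (cl_e k) (cl_e j)))"
    by (subst (2) S2) (simp add: S_def sum.distrib[symmetric] cs_add_right)
  also have "\<dots> = (\<Sum>j\<in>UNIV. \<Sum>k\<in>UNIV. if j = k then cs (s j k) (cl_scalar (-2)) else 0)"
    by (simp add: cl_e_sym cs_zero_right if_distrib cong: if_cong)
  also have "\<dots> = (\<Sum>j\<in>UNIV. cs (s j j) (cl_scalar (-2)))"
    by simp
  also have "\<dots> = cl_scalar (- (\<Sum>j\<in>UNIV. s j j)) + cl_scalar (- (\<Sum>j\<in>UNIV. s j j))"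
  proof -
    have q: "(\<Sum>x\<in>UNIV. - (s x x * 2)) = - (2 * (\<Sum>j\<in>UNIV. s j j))"
      by (simp add: sum_negf sum_distrib_left mult.commute)
    show ?thesis by (simp add: cs_sum_left[symmetric] vec_eq_iff cs_def cl_scalar_def q)
  qed
  finally have "S + S = cl_scalar (- (\<Sum>j\<in>UNIV. s j j)) + cl_scalar (- (\<Sum>j\<in>UNIV. s j j))" .
  then have "(2::real) *\<^sub>R S = 2 *\<^sub>R cl_scalar (- (\<Sum>j\<in>UNIV. s j j))" by (simp add: scaleR_2)
  then show ?thesis unfolding S_def by simp
qed


lemma main_id:
  fixes \<phi> :: "(real, 'n::{finite,linorder}) vec \<Rightarrow> complex" and f :: "(real, 'n) vec \<Rightarrow> 'n clif"
  assumes O: "open \<Omega>" and x: "x \<in> \<Omega>" and tw: "twice_differentiable_on \<phi> \<Omega>" and fd: "f differentiable_on \<Omega>"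
  shows "dirac (\<lambda>y. dirac (\<lambda>z. cl_scalar (\<phi> z)) y - cl_mult (cl_scalar (\<phi> y)) (f y)) x
         + cl_mult (dirac (\<lambda>z. cl_scalar (\<phi> z)) x - cl_mult (cl_scalar (\<phi> x)) (f x)) (f x)
       = cl_scalar (- laplacian \<phi> x) - cs (\<phi> x) (dirac f x + cl_mult (f x) (f x))"
proof -
  have phid: "\<phi> differentiable_on \<Omega>" and pdd: "\<And>j. pd j \<phi> differentiable_on \<Omega>"
    using tw unfolding twice_differentiable_on_def by auto
  have dphi: "(\<phi> has_derivative frechet_derivative \<phi> (at y)) (at y)" if "y \<in> \<Omega>" for y
    using phid O that by (meson differentiable_on_eq_differentiable_at frechet_derivative_works)
  have dpk_d: "pd k \<phi> differentiable (at x)" for k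
    using pdd O x by (meson differentiable_on_eq_differentiable_at)
  have dpk: "(pd k \<phi> has_derivative frechet_derivative (pd k \<phi>) (at x)) (at x)" for k
    using dpk_d frechet_derivative_works by blast
  have df: "(f has_derivative frechet_derivative f (at x)) (at x)"
    using fd O x by (meson differentiable_on_eq_differentiable_at frechet_derivative_works)
  have P: "dirac (\<lambda>z. cl_scalar (\<phi> z)) y = (\<Sum>k\<in>UNIV. cs (pd k \<phi> y) (cl_e k))" if y: "y \<in> \<Omega>" for y
    unfolding dirac_def
  proof (rule sum.cong[OF refl])
    fix k
    have "((\<lambda>z. cs (\<phi> z) (cl_scalar 1 :: 'n clif)) has_derivative (\<lambda>h. cs (frechet_derivative \<phi> (at y) h) (cl_scalar 1))) (at y)"
      using bounded_bilinear.FDERIV[OF bounded_bilinear_cs dphi[OF y] has_derivative_const, of "cl_scalar 1"]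
      by (simp add: cs_zero_right)
    then have "pd k (\<lambda>z. cs (\<phi> z) (cl_scalar 1 :: 'n clif)) y = cs (pd k \<phi> y) (cl_scalar 1)"
      using pd_eq by (simp add: pd_def)
    then have "pd k (\<lambda>z. cl_scalar (\<phi> z) :: 'n clif) y = cl_scalar (pd k \<phi> y)"
      by (simp only: cl_scalar_cs[symmetric])
    then show "cl_mult (cl_e k) (pd k (\<lambda>z. cl_scalar (\<phi> z)) y) = cs (pd k \<phi> y) (cl_e k)"
      by (simp only: cl_mult_scalar_right)
  qed
  define Q where "Q y = (\<Sum>k\<in>UNIV. cs (pd k \<phi> y) (cl_e k)) - cs (\<phi> y) (f y)" for y
  have T1: "dirac (\<lambda>y. dirac (\<lambda>z. cl_scalar (\<phi> z)) y - cl_mult (cl_scalar (\<phi> y)) (f y)) x = dirac Q x"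
    unfolding dirac_def
    by (intro sum.cong refl arg_cong[where f="cl_mult _"] pd_local[OF O x])
       (simp add: P[unfolded dirac_def] Q_def cl_mult_scalar_left)
  have dQ: "(Q has_derivative (\<lambda>h. (\<Sum>k\<in>UNIV. cs (frechet_derivative (pd k \<phi>) (at x) h) (cl_e k))
        - (cs (\<phi> x) (frechet_derivative f (at x) h) + cs (frechet_derivative \<phi> (at x) h) (f x)))) (at x)"
  proof -
    have a: "((\<lambda>y. cs (pd k \<phi> y) (cl_e k)) has_derivative (\<lambda>h. cs (frechet_derivative (pd k \<phi>) (at x) h) (cl_e k))) (at x)" for k
      using bounded_bilinear.FDERIV[OF bounded_bilinear_cs dpk has_derivative_const[where c="cl_e k"]]
      by (simp add: cs_zero_right)
    have b: "((\<lambda>y. cs (\<phi> y) (f y)) has_derivative (\<lambda>h. cs (\<phi> x) (frechet_derivative f (at x) h) + cs (frechet_derivative \<phi> (at x) h) (f x))) (at x)"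
      using bounded_bilinear.FDERIV[OF bounded_bilinear_cs dphi[OF x] df] .
    show ?thesis unfolding Q_def[abs_def]
      by (intro has_derivative_diff has_derivative_sum a b)
  qed
  have pdQ: "pd j Q x = (\<Sum>k\<in>UNIV. cs (pd j (pd k \<phi>) x) (cl_e k)) - (cs (\<phi> x) (pd j f x) + cs (pd j \<phi> x) (f x))" for j
    using pd_eq[OF dQ, of j] by (simp add: pd_def)
  define s where "s j k = pd j (pd k \<phi>) x" for j k
  have sym: "s j k = s k j" for j k
    unfolding s_def using young[OF O x phid dpk_d dpk_d] by simp
  have A: "(\<Sum>j\<in>UNIV. \<Sum>k\<in>UNIV. cs (s j k) (cl_mult (cl_e j) (cl_e k))) = cl_scalar (- laplacian \<phi> x)"
    using sym_sum[of s, OF sym] unfolding laplacian_def s_def by simp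
  define B where "B = (\<Sum>j\<in>UNIV. cs (pd j \<phi> x) (cl_mult (cl_e j) (f x)))"
  have DQ: "dirac Q x = (\<Sum>j\<in>UNIV. \<Sum>k\<in>UNIV. cs (s j k) (cl_mult (cl_e j) (cl_e k))) - (cs (\<phi> x) (dirac f x) + B)"
    unfolding dirac_def pdQ B_def s_def
    by (simp add: cl_mult_diff_right cl_mult_add_right cl_mult_sum_right cl_mult_cs_right
        sum_subtractf sum.distrib cs_sum_right)
  have T2: "cl_mult (dirac (\<lambda>z. cl_scalar (\<phi> z)) x - cl_mult (cl_scalar (\<phi> x)) (f x)) (f x)
      = B - cs (\<phi> x) (cl_mult (f x) (f x))"
    unfolding P[OF x] B_def
    by (simp add: cl_mult_scalar_left cl_mult_diff_left cl_mult_sum_left cl_mult_cs_left)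
  show ?thesis unfolding T1 T2 DQ A by (simp add: cs_add_right algebra_simps)
qed

theorem proposition3p1:
  fixes \<Omega> :: "((real, 'n::{finite,linorder}) vec) set"
    and v :: "(real, 'n) vec \<Rightarrow> complex"
    and f :: "(real, 'n) vec \<Rightarrow> 'n clif"
  assumes "open \<Omega>" and "CARD('n) > 1" and "f differentiable_on \<Omega>"
  shows "(\<forall>\<phi>. twice_differentiable_on \<phi> \<Omega> \<longrightarrow>
            (\<forall>x\<in>\<Omega>. cl_scalar (- laplacian \<phi> x - v x * \<phi> x) =
               dirac (\<lambda>y. dirac (\<lambda>z. cl_scalar (\<phi> z)) y - cl_mult (cl_scalar (\<phi> y)) (f y)) x
               + cl_mult (dirac (\<lambda>z. cl_scalar (\<phi> z)) x - cl_mult (cl_scalar (\<phi> x)) (f x)) (f x)))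
         \<longleftrightarrow> (\<forall>x\<in>\<Omega>. dirac f x + cl_mult (f x) (f x) = cl_scalar (v x))"
proof -
  have split: "cl_scalar (- laplacian \<phi> x - v x * \<phi> x) = cl_scalar (- laplacian \<phi> x) - cs (\<phi> x) (cl_scalar (v x))" for \<phi> x
    by (simp add: vec_eq_iff cl_scalar_def cs_def)
  have key: "(cl_scalar (- laplacian \<phi> x - v x * \<phi> x) =
               dirac (\<lambda>y. dirac (\<lambda>z. cl_scalar (\<phi> z)) y - cl_mult (cl_scalar (\<phi> y)) (f y)) x
               + cl_mult (dirac (\<lambda>z. cl_scalar (\<phi> z)) x - cl_mult (cl_scalar (\<phi> x)) (f x)) (f x))
          \<longleftrightarrow> cs (\<phi> x) (cl_scalar (v x)) = cs (\<phi> x) (dirac f x + cl_mult (f x) (f x))"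
    if "twice_differentiable_on \<phi> \<Omega>" "x \<in> \<Omega>" for \<phi> x
    unfolding main_id[OF assms(1) that(2,1) assms(3)] split by auto
  have tw1: "twice_differentiable_on (\<lambda>_. 1) \<Omega>"
  proof -
    have z: "pd j (\<lambda>_. 1 :: complex) = (\<lambda>_. 0)" for j :: 'n
      by (rule ext) (simp add: pd_eq[OF has_derivative_const])
    then show ?thesis unfolding twice_differentiable_on_def z by simp
  qed
  show ?thesis
  proof
    assume H: "\<forall>\<phi>. twice_differentiable_on \<phi> \<Omega> \<longrightarrow> (\<forall>x\<in>\<Omega>. cl_scalar (- laplacian \<phi> x - v x * \<phi> x) =
               dirac (\<lambda>y. dirac (\<lambda>z. cl_scalar (\<phi> z)) y - cl_mult (cl_scalar (\<phi> y)) (f y)) x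
               + cl_mult (dirac (\<lambda>z. cl_scalar (\<phi> z)) x - cl_mult (cl_scalar (\<phi> x)) (f x)) (f x))"
    show "\<forall>x\<in>\<Omega>. dirac f x + cl_mult (f x) (f x) = cl_scalar (v x)"
    proof
      fix x assume x: "x \<in> \<Omega>"
      have h1: "\<forall>x\<in>\<Omega>. cl_scalar (- laplacian (\<lambda>_. 1) x - v x * 1) =
               dirac (\<lambda>y. dirac (\<lambda>z. cl_scalar 1) y - cl_mult (cl_scalar 1) (f y)) x
               + cl_mult (dirac (\<lambda>z. cl_scalar 1) x - cl_mult (cl_scalar 1) (f x)) (f x)"
        using H tw1 by blast
      have "cs 1 (cl_scalar (v x)) = cs 1 (dirac f x + cl_mult (f x) (f x))"
        using iffD1[OF key[OF tw1 x] bspec[OF h1 x]] .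
      then show "dirac f x + cl_mult (f x) (f x) = cl_scalar (v x)" by (simp add: cs_one)
    qed
  next
    assume H: "\<forall>x\<in>\<Omega>. dirac f x + cl_mult (f x) (f x) = cl_scalar (v x)"
    show "\<forall>\<phi>. twice_differentiable_on \<phi> \<Omega> \<longrightarrow> (\<forall>x\<in>\<Omega>. cl_scalar (- laplacian \<phi> x - v x * \<phi> x) =
               dirac (\<lambda>y. dirac (\<lambda>z. cl_scalar (\<phi> z)) y - cl_mult (cl_scalar (\<phi> y)) (f y)) x
               + cl_mult (dirac (\<lambda>z. cl_scalar (\<phi> z)) x - cl_mult (cl_scalar (\<phi> x)) (f x)) (f x))"
      using key H by simp
  qed
qed

end
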